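(* Let $c\ge 0$, $m\ge 2$, and let $x=((x^1,n_1),\dots,(x^q,n_q))$ be a non-convergent Nash equilibrium of the best-worst rule $s=(c,m)$. Then $n_i\le 2$ for every $i\in[q]$, and $n_1=n_q=2$. In particular, for $m=3$ no non-convergent Nash equilibrium exists.
   Context: Setting: voters' ideal points are distributed uniformly (unit mass, Lebesgue measure) on $[0,1]$. There are $m$ candidates; a profile is $x=(x_1,\dots,x_m)\in[0,1]^m$. A voter with ideal point $y$ ranks candidates by distance $|x_i-y|$ (closer is better); ties are broken by a fair lottery (uniformly random strict order among tied candidates). Under the best-worst rule $s=(c,m)$ ($c\ge0$), a candidate receives $1$ point from each voter ranking her first, $-c$ from each voter ranking her last ($m$-th), and $0$ otherwise; $v_i(x)$ is candidate $i$'s expected total points. A (pure-strategy Nash) equilibrium is a profile $x^*$ with $v_i(x^* )\ge v_i(t,x^*_{-i})$ for all $i$ and $t\in[0,1]$ ($(t,x_{-i})$ is $x$ with $x_i$ replaced by $t$); it is non-convergent if at least two platforms are distinct. $[n]=\{1,\dots,n\}$. A profile determines its distinct occupied positions $x^1<\dots<x^q$, with $n_j$ the number of candidates at $x^j$; we write $x=((x^1,n_1),\dots,(x^q,n_q))$. *)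

theory Defs
  imports "HOL-Analysis.Analysis"
begin

(* Candidates are indexed 0..m-1; a profile is x :: nat => real (only x 0..x (m-1) matter). *)

definition closest_set :: "nat \<Rightarrow> (nat \<Rightarrow> real) \<Rightarrow> real \<Rightarrow> nat set" where
  "closest_set m x y = {j. j < m \<and> (\<forall>k<m. \<bar>x j - y\<bar> \<le> \<bar>x k - y\<bar>)}"

definition farthest_set :: "nat \<Rightarrow> (nat \<Rightarrow> real) \<Rightarrow> real \<Rightarrow> nat set" where
  "farthest_set m x y = {j. j < m \<and> (\<forall>k<m. \<bar>x k - y\<bar> \<le> \<bar>x j - y\<bar>)}"

(* probability (under fair tie-breaking lottery) that voter y ranks candidate i first / last *)
definition first_prob :: "nat \<Rightarrow> (nat \<Rightarrow> real) \<Rightarrow> nat \<Rightarrow> real \<Rightarrow> real" where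
  "first_prob m x i y = (if i \<in> closest_set m x y then 1 / real (card (closest_set m x y)) else 0)"

definition last_prob :: "nat \<Rightarrow> (nat \<Rightarrow> real) \<Rightarrow> nat \<Rightarrow> real \<Rightarrow> real" where
  "last_prob m x i y = (if i \<in> farthest_set m x y then 1 / real (card (farthest_set m x y)) else 0)"

(* expected score v_i(x) under the best-worst rule s = (c,m), voters uniform on [0,1] *)
definition bw_score :: "real \<Rightarrow> nat \<Rightarrow> (nat \<Rightarrow> real) \<Rightarrow> nat \<Rightarrow> real" where
  "bw_score c m x i = (LINT y:{0..1}|lborel. first_prob m x i y - c * last_prob m x i y)"

definition is_profile :: "nat \<Rightarrow> (nat \<Rightarrow> real) \<Rightarrow> bool" where
  "is_profile m x \<longleftrightarrow> (\<forall>i<m. x i \<in> {0..1})"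

definition bw_nash_eq :: "real \<Rightarrow> nat \<Rightarrow> (nat \<Rightarrow> real) \<Rightarrow> bool" where
  "bw_nash_eq c m x \<longleftrightarrow> is_profile m x \<and>
     (\<forall>i<m. \<forall>t\<in>{0..1}. bw_score c m (x(i := t)) i \<le> bw_score c m x i)"

definition non_convergent :: "nat \<Rightarrow> (nat \<Rightarrow> real) \<Rightarrow> bool" where
  "non_convergent m x \<longleftrightarrow> (\<exists>i<m. \<exists>j<m. x i \<noteq> x j)"

definition mult_at :: "nat \<Rightarrow> (nat \<Rightarrow> real) \<Rightarrow> real \<Rightarrow> nat" where
  "mult_at m x p = card {i. i < m \<and> x i = p}"

end

theory Submission
  imports Defs
begin


lemma piece_int:
  fixes f :: "real \<Rightarrow> real"
  assumes A: "\<forall>y\<in>{0..1}. u < y \<and> y < v \<longrightarrow> f y = K"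
    and B: "\<forall>y\<in>{0..1}. (y < u \<or> v < y) \<longrightarrow> f y = 0"
  shows "set_integrable lborel {0..1} f \<and>
         (LINT y:{0..1}|lborel. f y) = K * measure lborel ({u<..<v} \<inter> {0..1})"
proof -
  let ?I = "{u<..<v} \<inter> {0..1::real}"
  have eq: "indicator {0..1} y *\<^sub>R f y =
      K * indicator ?I y + f u * indicator ({u} \<inter> {0..1}) y
      + (if u = v then 0 else f v * indicator ({v} \<inter> {0..1}) y)" for y
    using A B by (cases "y \<in> {0..1}"; cases "y = u"; cases "y = v"; auto simp: indicator_def)
  have fin: "emeasure lborel S < \<infinity>" if "S \<subseteq> {0..1}" for S :: "real set"
  proof -
    have "emeasure lborel S \<le> emeasure lborel {0..1::real}" using that by (rule emeasure_mono) simp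
    also have "\<dots> < \<infinity>" by simp
    finally show ?thesis .
  qed
  have i1: "integrable lborel (indicator ?I :: real \<Rightarrow> real)"
    using fin[of ?I] by (intro integrable_real_indicator) auto
  have i2: "integrable lborel (indicator ({u} \<inter> {0..1}) :: real \<Rightarrow> real)"
    using fin[of "{u} \<inter> {0..1}"] by (intro integrable_real_indicator) auto
  have i3: "integrable lborel (indicator ({v} \<inter> {0..1}) :: real \<Rightarrow> real)"
    using fin[of "{v} \<inter> {0..1}"] by (intro integrable_real_indicator) auto
  have m2: "measure lborel ({u} \<inter> {0..1::real}) = 0"
    by (cases "u \<in> {0..1}") auto
  have m3: "measure lborel ({v} \<inter> {0..1::real}) = 0"
    by (cases "v \<in> {0..1}") auto
  have int: "integrable lborel (\<lambda>y. K * indicator ?I y + f u * indicator ({u} \<inter> {0..1}) y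
      + (if u = v then 0 else f v * indicator ({v} \<inter> {0..1}) y))"
    using i1 i2 i3 by (cases "u = v") auto
  have val: "(\<integral>y. (K * indicator ?I y + f u * indicator ({u} \<inter> {0..1}) y
      + (if u = v then 0 else f v * indicator ({v} \<inter> {0..1}) y)) \<partial>lborel) = K * measure lborel ?I"
    using i1 i2 i3 m2 m3 by (cases "u = v") (auto simp: fin)
  show ?thesis
    unfolding set_integrable_def set_lebesgue_integral_def eq using int val by simp
qed


lemma first_int:
  assumes "i < m"
    and H1: "\<forall>y\<in>{0..1}. u < y \<and> y < v \<longrightarrow> (\<forall>k<m. z k \<noteq> z i \<longrightarrow> \<bar>z i - y\<bar> < \<bar>z k - y\<bar>)"
    and H2: "\<forall>y\<in>{0..1}. (y < u \<or> v < y) \<longrightarrow> (\<exists>k<m. \<bar>z k - y\<bar> < \<bar>z i - y\<bar>)"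
  shows "set_integrable lborel {0..1} (first_prob m z i) \<and>
    (LINT y:{0..1}|lborel. first_prob m z i y)
      = (1 / real (mult_at m z (z i))) * measure lborel ({u<..<v} \<inter> {0..1})"
proof (rule piece_int)
  show "\<forall>y\<in>{0..1}. u < y \<and> y < v \<longrightarrow> first_prob m z i y = 1 / real (mult_at m z (z i))"
  proof (intro ballI impI)
    fix y :: real assume y: "y \<in> {0..1}" "u < y \<and> y < v"
    have "closest_set m z y = {k. k < m \<and> z k = z i}"
    proof (intro set_eqI iffI)
      fix j assume j: "j \<in> closest_set m z y"
      hence "j < m" "\<bar>z j - y\<bar> \<le> \<bar>z i - y\<bar>" using assms(1) by (auto simp: closest_set_def)
      thus "j \<in> {k. k < m \<and> z k = z i}" using H1 y by fastforce
    next
      fix j assume "j \<in> {k. k < m \<and> z k = z i}"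
      thus "j \<in> closest_set m z y" using H1 y unfolding closest_set_def
        by (smt (verit) mem_Collect_eq)
    qed
    moreover have "i \<in> closest_set m z y" using \<open>i < m\<close> calculation by auto
    ultimately show "first_prob m z i y = 1 / real (mult_at m z (z i))"
      by (simp add: first_prob_def mult_at_def)
  qed
  show "\<forall>y\<in>{0..1}. (y < u \<or> v < y) \<longrightarrow> first_prob m z i y = 0"
  proof (intro ballI impI)
    fix y :: real assume "y \<in> {0..1}" "y < u \<or> v < y"
    then obtain k where "k < m" "\<bar>z k - y\<bar> < \<bar>z i - y\<bar>" using H2 by blast
    hence "i \<notin> closest_set m z y" by (force simp: closest_set_def)
    thus "first_prob m z i y = 0" by (simp add: first_prob_def)
  qed
qed

lemma last_int:
  assumes "i < m"
    and H1: "\<forall>y\<in>{0..1}. u < y \<and> y < v \<longrightarrow> (\<forall>k<m. z k \<noteq> z i \<longrightarrow> \<bar>z k - y\<bar> < \<bar>z i - y\<bar>)"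
    and H2: "\<forall>y\<in>{0..1}. (y < u \<or> v < y) \<longrightarrow> (\<exists>k<m. \<bar>z i - y\<bar> < \<bar>z k - y\<bar>)"
  shows "set_integrable lborel {0..1} (last_prob m z i) \<and>
    (LINT y:{0..1}|lborel. last_prob m z i y)
      = (1 / real (mult_at m z (z i))) * measure lborel ({u<..<v} \<inter> {0..1})"
proof (rule piece_int)
  show "\<forall>y\<in>{0..1}. u < y \<and> y < v \<longrightarrow> last_prob m z i y = 1 / real (mult_at m z (z i))"
  proof (intro ballI impI)
    fix y :: real assume y: "y \<in> {0..1}" "u < y \<and> y < v"
    have "farthest_set m z y = {k. k < m \<and> z k = z i}"
    proof (intro set_eqI iffI)
      fix j assume j: "j \<in> farthest_set m z y"
      hence "j < m" "\<bar>z i - y\<bar> \<le> \<bar>z j - y\<bar>" using assms(1) by (auto simp: farthest_set_def)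
      thus "j \<in> {k. k < m \<and> z k = z i}" using H1 y by fastforce
    next
      fix j assume "j \<in> {k. k < m \<and> z k = z i}"
      thus "j \<in> farthest_set m z y" using H1 y unfolding farthest_set_def
        by (smt (verit) mem_Collect_eq)
    qed
    moreover have "i \<in> farthest_set m z y" using \<open>i < m\<close> calculation by auto
    ultimately show "last_prob m z i y = 1 / real (mult_at m z (z i))"
      by (simp add: last_prob_def mult_at_def)
  qed
  show "\<forall>y\<in>{0..1}. (y < u \<or> v < y) \<longrightarrow> last_prob m z i y = 0"
  proof (intro ballI impI)
    fix y :: real assume "y \<in> {0..1}" "y < u \<or> v < y"
    then obtain k where "k < m" "\<bar>z i - y\<bar> < \<bar>z k - y\<bar>" using H2 by blast
    hence "i \<notin> farthest_set m z y" by (force simp: farthest_set_def)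
    thus "last_prob m z i y = 0" by (simp add: last_prob_def)
  qed
qed

lemma score_calc:
  assumes "i < m"
    and H1: "\<forall>y\<in>{0..1}. u < y \<and> y < v \<longrightarrow> (\<forall>k<m. z k \<noteq> z i \<longrightarrow> \<bar>z i - y\<bar> < \<bar>z k - y\<bar>)"
    and H2: "\<forall>y\<in>{0..1}. (y < u \<or> v < y) \<longrightarrow> (\<exists>k<m. \<bar>z k - y\<bar> < \<bar>z i - y\<bar>)"
    and G1: "\<forall>y\<in>{0..1}. u' < y \<and> y < v' \<longrightarrow> (\<forall>k<m. z k \<noteq> z i \<longrightarrow> \<bar>z k - y\<bar> < \<bar>z i - y\<bar>)"
    and G2: "\<forall>y\<in>{0..1}. (y < u' \<or> v' < y) \<longrightarrow> (\<exists>k<m. \<bar>z i - y\<bar> < \<bar>z k - y\<bar>)"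
  shows "bw_score c m z i = (measure lborel ({u<..<v} \<inter> {0..1})
          - c * measure lborel ({u'<..<v'} \<inter> {0..1})) / real (mult_at m z (z i))"
proof -
  note F = first_int[OF assms(1) H1 H2]
  note L = last_int[OF assms(1) G1 G2]
  have "bw_score c m z i = (LINT y:{0..1}|lborel. first_prob m z i y)
       - (LINT y:{0..1}|lborel. c * last_prob m z i y)"
  proof -
    have "integrable lborel (\<lambda>x. c * (indicator {0..1} x * last_prob m z i x))"
      using L by (simp add: set_integrable_def)
    hence "set_integrable lborel {0..1} (\<lambda>y. c * last_prob m z i y)"
      unfolding set_integrable_def by (simp add: mult.left_commute)
    thus ?thesis unfolding bw_score_def using F by (intro set_integral_diff(2)) auto
  qed
  also have "\<dots> = (LINT y:{0..1}|lborel. first_prob m z i y)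
       - c * (LINT y:{0..1}|lborel. last_prob m z i y)" by simp
  finally show ?thesis using F L by (simp add: diff_divide_distrib)
qed

lemma refl_score: "bw_score c m (\<lambda>k. 1 - z k) i = bw_score c m z i"
proof -
  let ?h = "\<lambda>y. first_prob m z i y - c * last_prob m z i y"
  have cs: "closest_set m (\<lambda>k. 1 - z k) y = closest_set m z (1 - y)" for y
    unfolding closest_set_def by (smt (verit) Collect_cong)
  have fs: "farthest_set m (\<lambda>k. 1 - z k) y = farthest_set m z (1 - y)" for y
    unfolding farthest_set_def by (smt (verit) Collect_cong)
  have e: "first_prob m (\<lambda>k. 1 - z k) i y - c * last_prob m (\<lambda>k. 1 - z k) i y = ?h (1 - y)" for y
    by (simp add: first_prob_def last_prob_def cs fs)
  have ind: "indicator {0..1::real} (1 + (-1) * y) = (indicator {0..1} y :: real)" for y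
    by (auto simp: indicator_def)
  have ind2: "indicator {0..1::real} (1 - y) = (indicator {0..1} y :: real)" for y
    by (auto simp: indicator_def)
  have "bw_score c m z i = (\<integral>y. indicator {0..1} y *\<^sub>R ?h y \<partial>lborel)"
    by (simp add: bw_score_def set_lebesgue_integral_def)
  also have "\<dots> = \<bar>-1\<bar> *\<^sub>R (\<integral>y. indicator {0..1} (1 + (-1) * y) *\<^sub>R ?h (1 + (-1) * y) \<partial>lborel)"
    by (rule lborel_integral_real_affine) simp
  also have "\<dots> = (\<integral>y. indicator {0..1} y *\<^sub>R ?h (1 - y) \<partial>lborel)"
    by (simp add: ind ind2)
  also have "\<dots> = bw_score c m (\<lambda>k. 1 - z k) i"
    by (simp add: bw_score_def set_lebesgue_integral_def e)
  finally show ?thesis by simp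
qed



lemma interior_score:
  assumes "i < m" "a < z i" "z i < b" "0 \<le> a" "b \<le> 1"
    and sep: "\<forall>k<m. z k = z i \<or> z k \<le> a \<or> b \<le> z k"
    and ka: "ka < m" "z ka = a" and kb: "kb < m" "z kb = b"
  shows "bw_score c m z i = ((b - a) / 2) / real (mult_at m z (z i))"
proof -
  let ?p = "z i"
  have H1: "\<forall>y\<in>{0..1}. (a + ?p)/2 < y \<and> y < (?p + b)/2 \<longrightarrow> (\<forall>k<m. z k \<noteq> z i \<longrightarrow> \<bar>z i - y\<bar> < \<bar>z k - y\<bar>)"
  proof (intro ballI impI allI)
    fix y k assume "y \<in> {0..1::real}" "(a + ?p)/2 < y \<and> y < (?p + b)/2" "k < m" "z k \<noteq> z i"
    moreover have "z k \<le> a \<or> b \<le> z k" using sep calculation by blast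
    ultimately show "\<bar>z i - y\<bar> < \<bar>z k - y\<bar>" using assms(2,3) by (auto simp: abs_if)
  qed
  have H2: "\<forall>y\<in>{0..1}. (y < (a + ?p)/2 \<or> (?p + b)/2 < y) \<longrightarrow> (\<exists>k<m. \<bar>z k - y\<bar> < \<bar>z i - y\<bar>)"
  proof (intro ballI impI)
    fix y assume "y \<in> {0..1::real}" "y < (a + ?p)/2 \<or> (?p + b)/2 < y"
    thus "\<exists>k<m. \<bar>z k - y\<bar> < \<bar>z i - y\<bar>"
    proof (elim disjE)
      assume "y < (a + ?p)/2" thus ?thesis using ka assms(2,3) by (intro exI[of _ ka]) (auto simp: abs_if)
    next
      assume "(?p + b)/2 < y" thus ?thesis using kb assms(2,3) by (intro exI[of _ kb]) (auto simp: abs_if)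
    qed
  qed
  have G1: "\<forall>y\<in>{0..1}. (0::real) < y \<and> y < 0 \<longrightarrow> (\<forall>k<m. z k \<noteq> z i \<longrightarrow> \<bar>z k - y\<bar> < \<bar>z i - y\<bar>)"
    by auto
  have G2: "\<forall>y\<in>{0..1}. (y < 0 \<or> 0 < y) \<longrightarrow> (\<exists>k<m. \<bar>z i - y\<bar> < \<bar>z k - y\<bar>)"
  proof (intro ballI impI)
    fix y :: real
    show "\<exists>k<m. \<bar>z i - y\<bar> < \<bar>z k - y\<bar>"
    proof (cases "y \<le> ?p")
      case True thus ?thesis using kb assms(3) by (intro exI[of _ kb]) (auto simp: abs_if)
    next
      case False thus ?thesis using ka assms(2) by (intro exI[of _ ka]) (auto simp: abs_if)
    qed
  qed
  have "bw_score c m z i = (measure lborel ({(a + ?p)/2<..<(?p + b)/2} \<inter> {0..1})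
          - c * measure lborel ({0<..<(0::real)} \<inter> {0..1})) / real (mult_at m z (z i))"
  proof -
    have e0: "{0<..<0::real} \<inter> {0..1} = {}" by auto
    show ?thesis using score_calc[OF assms(1) H1 H2 G1 G2, of c] by (simp add: e0)
  qed
  moreover have "{(a + ?p)/2<..<(?p + b)/2} \<inter> {0..1} = {(a + ?p)/2<..<(?p + b)/2}"
    using assms by auto
  moreover have "(?p + b)/2 - (a + ?p)/2 = (b - a)/2" by (simp add: field_simps)
  ultimately show ?thesis using assms by simp
qed

lemma leftmost_score:
  assumes "i < m" "z i < b" "0 \<le> z i" "b \<le> 1"
    and sep: "\<forall>k<m. z k = z i \<or> b \<le> z k"
    and kb: "kb < m" "z kb = b"
    and hi: "\<forall>k<m. z k \<le> hi" "kh < m" "z kh = hi" and hi1: "hi \<le> 1"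
  shows "bw_score c m z i = ((z i + b)/2 - c * (1 - (z i + hi)/2)) / real (mult_at m z (z i))"
proof -
  let ?p = "z i"
  have bh: "b \<le> hi" using hi kb by auto
  have H1: "\<forall>y\<in>{0..1}. -1 < y \<and> y < (?p + b)/2 \<longrightarrow> (\<forall>k<m. z k \<noteq> z i \<longrightarrow> \<bar>z i - y\<bar> < \<bar>z k - y\<bar>)"
  proof (intro ballI impI allI)
    fix y k assume "y \<in> {0..1::real}" "-1 < y \<and> y < (?p + b)/2" "k < m" "z k \<noteq> z i"
    moreover have "b \<le> z k" using sep calculation by blast
    ultimately show "\<bar>z i - y\<bar> < \<bar>z k - y\<bar>" using assms(2,3) by (auto simp: abs_if)
  qed
  have H2: "\<forall>y\<in>{0..1}. (y < -1 \<or> (?p + b)/2 < y) \<longrightarrow> (\<exists>k<m. \<bar>z k - y\<bar> < \<bar>z i - y\<bar>)"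
  proof (intro ballI impI)
    fix y assume "y \<in> {0..1::real}" "y < -1 \<or> (?p + b)/2 < y"
    hence "(?p + b)/2 < y" by auto
    thus "\<exists>k<m. \<bar>z k - y\<bar> < \<bar>z i - y\<bar>" using kb assms(2,3) by (intro exI[of _ kb]) (auto simp: abs_if)
  qed
  have G1: "\<forall>y\<in>{0..1}. (?p + hi)/2 < y \<and> y < 2 \<longrightarrow> (\<forall>k<m. z k \<noteq> z i \<longrightarrow> \<bar>z k - y\<bar> < \<bar>z i - y\<bar>)"
  proof (intro ballI impI allI)
    fix y k assume "y \<in> {0..1::real}" "(?p + hi)/2 < y \<and> y < 2" "k < m" "z k \<noteq> z i"
    moreover have "b \<le> z k" "z k \<le> hi" using sep hi(1) calculation by auto
    ultimately show "\<bar>z k - y\<bar> < \<bar>z i - y\<bar>" using assms(2,3) bh by (auto simp: abs_if)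
  qed
  have G2: "\<forall>y\<in>{0..1}. (y < (?p + hi)/2 \<or> 2 < y) \<longrightarrow> (\<exists>k<m. \<bar>z i - y\<bar> < \<bar>z k - y\<bar>)"
  proof (intro ballI impI)
    fix y assume "y \<in> {0..1::real}" "y < (?p + hi)/2 \<or> 2 < y"
    hence "y < (?p + hi)/2" by auto
    thus "\<exists>k<m. \<bar>z i - y\<bar> < \<bar>z k - y\<bar>" using hi bh assms(2) by (intro exI[of _ kh]) (auto simp: abs_if)
  qed
  have "bw_score c m z i = (measure lborel ({-1<..<(?p + b)/2} \<inter> {0..1})
          - c * measure lborel ({(?p + hi)/2<..<2} \<inter> {0..1})) / real (mult_at m z (z i))"
    by (rule score_calc[OF assms(1) H1 H2 G1 G2])
  moreover have "{-1<..<(?p + b)/2} \<inter> {0..1} = {0..<(?p + b)/2}"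
    using assms by auto
  moreover have "{(?p + hi)/2<..<2} \<inter> {0..1} = {(?p + hi)/2<..1}"
    using assms bh by auto
  moreover have "measure lborel {(?p + hi)/2<..1} = 1 - (?p + hi)/2"
    using assms hi1 bh by (intro measure_lborel_Ioc) simp
  moreover have "measure lborel {0..<(?p + b)/2} = (?p + b)/2"
    using assms by simp
  ultimately show ?thesis by simp
qed



lemma refl_NE:
  assumes "bw_nash_eq c m x"
  shows "bw_nash_eq c m (\<lambda>k. 1 - x k)"
  unfolding bw_nash_eq_def is_profile_def
proof (intro conjI allI impI ballI)
  fix i assume "i < m" thus "1 - x i \<in> {0..1}" using assms by (auto simp: bw_nash_eq_def is_profile_def)
next
  fix i and t :: real assume i: "i < m" and t: "t \<in> {0..1}"
  have e: "(\<lambda>k. 1 - x k)(i := t) = (\<lambda>k. 1 - (x(i := 1 - t)) k)" by auto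
  have "1 - t \<in> {0..1}" using t by auto
  hence "bw_score c m (x(i := 1 - t)) i \<le> bw_score c m x i"
    using assms i by (auto simp: bw_nash_eq_def)
  thus "bw_score c m ((\<lambda>k. 1 - x k)(i := t)) i \<le> bw_score c m (\<lambda>k. 1 - x k) i"
    unfolding e refl_score .
qed

lemma mult_refl: "mult_at m (\<lambda>k. 1 - x k) (1 - p) = mult_at m x p"
  by (simp add: mult_at_def)

lemma exists_other:
  assumes "2 \<le> mult_at m x p" "i < m" "x i = p"
  shows "\<exists>j<m. j \<noteq> i \<and> x j = p"
proof (rule ccontr)
  assume "\<not> ?thesis"
  hence "{k. k < m \<and> x k = p} \<subseteq> {i}" by auto
  hence "card {k. k < m \<and> x k = p} \<le> card {i}" by (intro card_mono) auto
  thus False using assms(1) by (simp add: mult_at_def)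
qed

lemma mult_one:
  assumes "i < m" "x i = p" "\<forall>k<m. k \<noteq> i \<longrightarrow> x k \<noteq> p"
  shows "mult_at m x p = 1"
proof -
  have "{k. k < m \<and> x k = p} = {i}" using assms by auto
  thus ?thesis by (simp add: mult_at_def)
qed

lemma mult_ge1:
  assumes "i < m" "x i = p"
  shows "1 \<le> mult_at m x p"
proof -
  have "i \<in> {k. k < m \<and> x k = p}" using assms by auto
  moreover have "finite {k. k < m \<and> x k = p}" by auto
  ultimately show ?thesis unfolding mult_at_def
    by (metis One_nat_def Suc_leI card_gt_0_iff empty_iff)
qed

lemma mult_two:
  assumes "i < m" "x i = p" "j < m" "j \<noteq> i" "x j = p"
  shows "2 \<le> mult_at m x p"
proof -
  have "{i, j} \<subseteq> {k. k < m \<and> x k = p}" using assms by auto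
  moreover have "finite {k. k < m \<and> x k = p}" by auto
  ultimately have "card {i, j} \<le> mult_at m x p" unfolding mult_at_def by (rule card_mono[rotated])
  thus ?thesis using assms(4) by simp
qed

lemma interior_half:
  assumes NE: "bw_nash_eq c m x" and i: "i < m" "x i = p"
    and ka: "ka < m" "x ka = a" and kb: "kb < m" "x kb = b" and ab: "a < p" "p < b"
    and sep: "\<forall>k<m. x k = p \<or> x k \<le> a \<or> b \<le> x k"
    and N2: "2 \<le> mult_at m x p"
  shows "(p - a) / 2 \<le> (b - a) / (2 * real (mult_at m x p))"
proof -
  have prof: "\<forall>k<m. x k \<in> {0..1}" using NE by (simp add: bw_nash_eq_def is_profile_def)
  have a0: "0 \<le> a" "b \<le> 1" "p \<le> 1" using prof ka kb i by force+
  have orig: "bw_score c m x i = (b - a) / (2 * real (mult_at m x p))"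
    using interior_score[of i m a x b ka kb c] i ka kb ab sep a0 by simp
  obtain j where j: "j < m" "j \<noteq> i" "x j = p" using exists_other[OF N2 i] by blast
  define t where "t = (a + p) / 2"
  define z where "z = x(i := t)"
  have t: "a < t" "t < p" "t \<in> {0..1}" using ab a0 by (auto simp: t_def)
  have zi: "z i = t" by (simp add: z_def)
  have oth: "\<forall>k<m. k \<noteq> i \<longrightarrow> z k \<noteq> t"
  proof (intro allI impI)
    fix k assume k: "k < m" "k \<noteq> i"
    hence "z k = x k" by (simp add: z_def)
    moreover have "x k = p \<or> x k \<le> a \<or> b \<le> x k" using sep k by blast
    ultimately show "z k \<noteq> t" using t ab by auto
  qed
  have m1: "mult_at m z t = 1" using mult_one[OF i(1) zi oth] .
  have sepz: "\<forall>k<m. z k = z i \<or> z k \<le> a \<or> p \<le> z k"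
    using sep ab by (auto simp: z_def)
  have zka: "z ka = a" using ka ab i by (auto simp: z_def)
  have zj: "z j = p" using j by (simp add: z_def)
  have azi: "a < z i" "z i < p" using zi t by auto
  have "bw_score c m z i = (p - a) / 2 / real (mult_at m z (z i))"
    by (rule interior_score[OF i(1) azi a0(1) a0(3) sepz ka(1) zka j(1) zj])
  hence dev: "bw_score c m z i = (p - a) / 2" using zi m1 by simp
  have "bw_score c m z i \<le> bw_score c m x i"
    using NE i t unfolding bw_nash_eq_def z_def by blast
  thus ?thesis using dev orig by simp
qed

lemma interior_le2:
  assumes NE: "bw_nash_eq c m x" and i: "i < m" "x i = p"
    and ka: "ka < m" "x ka = a" and kb: "kb < m" "x kb = b" and ab: "a < p" "p < b"
    and sep: "\<forall>k<m. x k = p \<or> x k \<le> a \<or> b \<le> x k"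
  shows "mult_at m x p \<le> 2"
proof (rule ccontr)
  assume "\<not> ?thesis"
  hence N3: "3 \<le> mult_at m x p" by simp
  define N where "N = real (mult_at m x p)"
  have h1: "(p - a) / 2 \<le> (b - a) / (2 * N)"
    using interior_half[OF NE i ka kb ab sep] N3 by (simp add: N_def)
  have h2: "((1 - p) - (1 - b)) / 2 \<le> ((1 - a) - (1 - b)) / (2 * N)"
  proof -
    have i': "(\<lambda>k. 1 - x k) i = 1 - p" using i by simp
    have kb': "(\<lambda>k. 1 - x k) kb = 1 - b" using kb by simp
    have ka': "(\<lambda>k. 1 - x k) ka = 1 - a" using ka by simp
    have ab': "1 - b < 1 - p" "1 - p < 1 - a" using ab by auto
    have sep': "\<forall>k<m. (\<lambda>k. 1 - x k) k = 1 - p \<or> (\<lambda>k. 1 - x k) k \<le> 1 - b \<or> 1 - a \<le> (\<lambda>k. 1 - x k) k"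
      using sep by auto
    have N2': "2 \<le> mult_at m (\<lambda>k. 1 - x k) (1 - p)" using N3 by (simp add: mult_refl)
    have "((1 - p) - (1 - b)) / 2 \<le> ((1 - a) - (1 - b)) / (2 * real (mult_at m (\<lambda>k. 1 - x k) (1 - p)))"
      by (rule interior_half[OF refl_NE[OF NE] i(1) i' kb(1) kb' ka(1) ka' ab' sep' N2'])
    thus ?thesis by (simp add: mult_refl N_def)
  qed
  have N3': "N \<ge> 3" using N3 by (simp add: N_def)
  have q6: "(b - a) / (2 * N) \<le> (b - a) / 6"
    by (rule frac_le) (use ab N3' in linarith)+
  have h2': "(b - p) / 2 \<le> (b - a) / (2 * N)"
  proof -
    have e1: "(1 - p) - (1 - b) = b - p" and e2: "(1 - a) - (1 - b) = b - a" by simp_all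
    show ?thesis using h2 unfolding e1 e2 .
  qed
  obtain Q where Q: "Q = (b - a) / (2 * N)" by blast
  have "(p - a) / 2 \<le> Q" "(b - p) / 2 \<le> Q" "Q \<le> (b - a) / 6"
    unfolding Q by (rule h1, rule h2', rule q6)
  thus False using ab by argo
qed



lemma next_pos:
  fixes m :: nat and x :: "nat \<Rightarrow> real"
  assumes "kh < m" "lo < x kh"
  shows "\<exists>kb<m. lo < x kb \<and> (\<forall>k<m. lo < x k \<longrightarrow> x kb \<le> x k)"
proof -
  let ?T = "x ` {k. k < m \<and> lo < x k}"
  have "finite {k. k < m \<and> lo < x k}" by auto
  hence fin: "finite ?T" by (rule finite_imageI)
  have ne: "?T \<noteq> {}" using assms by auto
  have "Min ?T \<in> ?T" using Min_in[OF fin ne] .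
  then obtain kb where kb: "kb < m" "lo < x kb" "x kb = Min ?T" by auto
  have "\<forall>k<m. lo < x k \<longrightarrow> x kb \<le> x k" using kb(3) fin by auto
  thus ?thesis using kb by blast
qed

lemma prev_pos:
  fixes m :: nat and x :: "nat \<Rightarrow> real"
  assumes "kl < m" "x kl < p"
  shows "\<exists>ka<m. x ka < p \<and> (\<forall>k<m. x k < p \<longrightarrow> x k \<le> x ka)"
proof -
  let ?T = "x ` {k. k < m \<and> x k < p}"
  have "finite {k. k < m \<and> x k < p}" by auto
  hence fin: "finite ?T" by (rule finite_imageI)
  have ne: "?T \<noteq> {}" using assms by auto
  have "Max ?T \<in> ?T" using Max_in[OF fin ne] .
  then obtain ka where ka: "ka < m" "x ka < p" "x ka = Max ?T" by auto
  have "\<forall>k<m. x k < p \<longrightarrow> x k \<le> x ka" using ka(3) fin by auto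
  thus ?thesis using ka by blast
qed

lemma left_ge2:
  assumes c: "0 \<le> c" and NE: "bw_nash_eq c m x" and i: "i < m" "x i = lo"
    and lo: "\<forall>k<m. lo \<le> x k" and kh: "kh < m" "x kh = hi" and lh: "lo < hi"
    and hi: "\<forall>k<m. x k \<le> hi"
  shows "2 \<le> mult_at m x lo"
proof (rule ccontr)
  assume "\<not> ?thesis"
  hence uniq: "\<forall>k<m. k \<noteq> i \<longrightarrow> x k \<noteq> lo" using mult_two[of i m x lo] i by blast
  have m1: "mult_at m x lo = 1" using mult_one[OF i uniq] .
  obtain kb where kb: "kb < m" "lo < x kb" "\<forall>k<m. lo < x k \<longrightarrow> x kb \<le> x k"
    using next_pos[of kh m lo x] kh lh by auto
  define b where "b = x kb"
  have prof: "\<forall>k<m. x k \<in> {0..1}" using NE by (simp add: bw_nash_eq_def is_profile_def)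
  have lo0: "0 \<le> lo" using prof i by force
  have b1: "b \<le> 1" using prof kb by (force simp: b_def)
  have hi1: "hi \<le> 1" using prof kh by force
  have lb: "lo < b" using kb by (simp add: b_def)
  have bh: "b \<le> hi" using hi kb by (simp add: b_def)
  have sepx: "\<forall>k<m. x k = x i \<or> b \<le> x k"
  proof (intro allI impI)
    fix k assume k: "k < m"
    show "x k = x i \<or> b \<le> x k"
    proof (cases "x k = lo")
      case True thus ?thesis using i by simp
    next
      case False hence "lo < x k" using lo k by force
      thus ?thesis using kb k by (simp add: b_def)
    qed
  qed
  have orig: "bw_score c m x i = ((x i + b)/2 - c * (1 - (x i + hi)/2)) / real (mult_at m x (x i))"
    by (rule leftmost_score[OF i(1) _ _ b1 sepx kb(1) b_def[symmetric] hi kh hi1]) (use i lb lo0 in auto)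
  hence orig': "bw_score c m x i = (lo + b)/2 - c * (1 - (lo + hi)/2)" using m1 i by simp
  define t where "t = (lo + b) / 2"
  define z where "z = x(i := t)"
  have t: "lo < t" "t < b" "t \<in> {0..1}" using lb lo0 b1 by (auto simp: t_def)
  have zi: "z i = t" by (simp add: z_def)
  have oth: "\<forall>k<m. k \<noteq> i \<longrightarrow> z k \<noteq> t"
  proof (intro allI impI)
    fix k assume k: "k < m" "k \<noteq> i"
    hence "z k = x k" "x k \<noteq> lo" using uniq by (auto simp: z_def)
    moreover have "b \<le> x k" using sepx k i calculation by force
    ultimately show "z k \<noteq> t" using t by auto
  qed
  have mz: "mult_at m z t = 1" using mult_one[OF i(1) zi oth] .
  have sepz: "\<forall>k<m. z k = z i \<or> b \<le> z k"
  proof (intro allI impI)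
    fix k assume k: "k < m"
    show "z k = z i \<or> b \<le> z k"
    proof (cases "k = i")
      case True thus ?thesis by simp
    next
      case False
      hence "z k = x k" "x k \<noteq> lo" using uniq k by (auto simp: z_def)
      thus ?thesis using sepx k i by force
    qed
  qed
  have kbi: "kb \<noteq> i" using kb i by auto
  have khi: "kh \<noteq> i" using kh i lh by auto
  have zkb: "z kb = b" using kbi by (simp add: z_def b_def)
  have zkh: "z kh = hi" using khi kh by (simp add: z_def)
  have hiz: "\<forall>k<m. z k \<le> hi" using hi t bh by (simp add: z_def)
  have dev: "bw_score c m z i = ((z i + b)/2 - c * (1 - (z i + hi)/2)) / real (mult_at m z (z i))"
    by (rule leftmost_score[OF i(1) _ _ b1 sepz kb(1) zkb hiz kh(1) zkh hi1]) (use zi t in auto)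
  hence dev': "bw_score c m z i = (t + b)/2 - c * (1 - (t + hi)/2)" using mz zi by simp
  have "bw_score c m z i \<le> bw_score c m x i"
    using NE i t unfolding bw_nash_eq_def z_def by blast
  hence le: "(t + b)/2 - c * (1 - (t + hi)/2) \<le> (lo + b)/2 - c * (1 - (lo + hi)/2)"
    using dev' orig' by simp
  have "c * (1 - (t + hi)/2) \<le> c * (1 - (lo + hi)/2)"
    using c t by (intro mult_left_mono) auto
  with le t show False by argo
qed

lemma left_le2:
  assumes c: "0 \<le> c" and NE: "bw_nash_eq c m x" and i: "i < m" "x i = lo"
    and lo: "\<forall>k<m. lo \<le> x k" and kh: "kh < m" "x kh = hi" and lh: "lo < hi"
    and hi: "\<forall>k<m. x k \<le> hi"
  shows "mult_at m x lo \<le> 2"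
proof (rule ccontr)
  assume "\<not> ?thesis"
  hence N3: "3 \<le> mult_at m x lo" by simp
  define N where "N = real (mult_at m x lo)"
  have N3': "3 \<le> N" using N3 by (simp add: N_def)
  obtain j where j: "j < m" "j \<noteq> i" "x j = lo" using exists_other[of m x lo i] N3 i by auto
  obtain kb where kb: "kb < m" "lo < x kb" "\<forall>k<m. lo < x k \<longrightarrow> x kb \<le> x k"
    using next_pos[of kh m lo x] kh lh by auto
  define b where "b = x kb"
  have prof: "\<forall>k<m. x k \<in> {0..1}" using NE by (simp add: bw_nash_eq_def is_profile_def)
  have lo0: "0 \<le> lo" using prof i by force
  have b1: "b \<le> 1" using prof kb by (force simp: b_def)
  have hi1: "hi \<le> 1" using prof kh by force
  have lb: "lo < b" using kb by (simp add: b_def)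
  have bh: "b \<le> hi" using hi kb by (simp add: b_def)
  have sepx: "\<forall>k<m. x k = x i \<or> b \<le> x k"
  proof (intro allI impI)
    fix k assume k: "k < m"
    show "x k = x i \<or> b \<le> x k"
    proof (cases "x k = lo")
      case True thus ?thesis using i by simp
    next
      case False hence "lo < x k" using lo k by force
      thus ?thesis using kb k by (simp add: b_def)
    qed
  qed
  define S0 where "S0 = (lo + b)/2 - c * (1 - (lo + hi)/2)"
  have orig: "bw_score c m x i = ((x i + b)/2 - c * (1 - (x i + hi)/2)) / real (mult_at m x (x i))"
    by (rule leftmost_score[OF i(1) _ _ b1 sepx kb(1) b_def[symmetric] hi kh hi1]) (use i lb lo0 in auto)
  hence orig': "bw_score c m x i = S0 / N" using i by (simp add: S0_def N_def)
  have kbi: "kb \<noteq> i" using kb i by auto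
  have khi: "kh \<noteq> i" using kh i lh by auto
  have R1: "(b - lo) / 2 \<le> S0 / N"
  proof -
    define t where "t = (lo + b) / 2"
    define z where "z = x(i := t)"
    have t: "lo < t" "t < b" "t \<in> {0..1}" using lb lo0 b1 by (auto simp: t_def)
    have zi: "z i = t" by (simp add: z_def)
    have oth: "\<forall>k<m. k \<noteq> i \<longrightarrow> z k \<noteq> t"
    proof (intro allI impI)
      fix k assume k: "k < m" "k \<noteq> i"
      hence "z k = x k" by (auto simp: z_def)
      moreover have "x k = lo \<or> b \<le> x k" using sepx k i by auto
      ultimately show "z k \<noteq> t" using t by auto
    qed
    have mz: "mult_at m z t = 1" using mult_one[OF i(1) zi oth] .
    have sepz: "\<forall>k<m. z k = z i \<or> z k \<le> lo \<or> b \<le> z k"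
      using sepx i by (auto simp: z_def)
    have zj: "z j = lo" using j by (simp add: z_def)
    have zkb: "z kb = b" using kbi by (simp add: z_def b_def)
    have azi: "lo < z i" "z i < b" using zi t by auto
    have "bw_score c m z i = (b - lo) / 2 / real (mult_at m z (z i))"
      by (rule interior_score[OF i(1) azi lo0 b1 sepz j(1) zj kb(1) zkb])
    hence dev: "bw_score c m z i = (b - lo) / 2" using zi mz by simp
    have "bw_score c m z i \<le> bw_score c m x i"
      using NE i t unfolding bw_nash_eq_def z_def by blast
    thus ?thesis using dev orig' by simp
  qed
  show False
  proof (cases "S0 \<le> 0")
    case True
    hence "S0 / N \<le> 0" using N3' by (intro divide_nonpos_pos) auto
    thus False using R1 lb by argo
  next
    case False
    hence S0p: "0 < S0" by simp
    have q3: "S0 / N \<le> S0 / 3" by (rule frac_le) (use S0p N3' in linarith)+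
    have cL: "0 \<le> c * (1 - (lo + hi)/2)" using c lo0 hi1 lh by (intro mult_nonneg_nonneg) auto
    show False
    proof (cases "lo = 0")
      case True
      hence "S0 \<le> (b - lo) / 2" using cL by (simp add: S0_def)
      thus False using R1 q3 S0p by argo
    next
      case False
      hence lo_pos: "0 < lo" using lo0 by simp
      define e where "e = min lo (S0 / (3 * (1 + c)))"
      have c1: "0 < 1 + c" using c by simp
      have e0: "0 < e" using lo_pos S0p c1 by (simp add: e_def)
      have elo: "e \<le> lo" by (simp add: e_def)
      have "e \<le> S0 / (3 * (1 + c))" by (simp add: e_def)
      hence eS: "e * (1 + c) \<le> S0 / 3" using c1 by (simp add: field_simps)
      define t where "t = lo - e"
      define z where "z = x(i := t)"
      have t: "t < lo" "0 \<le> t" "t \<in> {0..1}" using e0 elo lo0 prof i by (auto simp: t_def)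
      have zi: "z i = t" by (simp add: z_def)
      have oth: "\<forall>k<m. k \<noteq> i \<longrightarrow> z k \<noteq> t"
      proof (intro allI impI)
        fix k assume k: "k < m" "k \<noteq> i"
        hence "z k = x k" by (auto simp: z_def)
        thus "z k \<noteq> t" using lo k t by force
      qed
      have mz: "mult_at m z t = 1" using mult_one[OF i(1) zi oth] .
      have sepz: "\<forall>k<m. z k = z i \<or> lo \<le> z k"
        using lo by (auto simp: z_def)
      have zj: "z j = lo" using j by (simp add: z_def)
      have zkh: "z kh = hi" using khi kh by (simp add: z_def)
      have hiz: "\<forall>k<m. z k \<le> hi" using hi t lh by (simp add: z_def)
      have lo1: "lo \<le> 1" using lb b1 by simp
      have "bw_score c m z i = ((z i + lo)/2 - c * (1 - (z i + hi)/2)) / real (mult_at m z (z i))"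
        by (rule leftmost_score[OF i(1) _ _ lo1 sepz j(1) zj hiz kh(1) zkh hi1]) (use zi t in auto)
      hence dev: "bw_score c m z i = (t + lo)/2 - c * (1 - (t + hi)/2)" using zi mz by simp
      have "bw_score c m z i \<le> bw_score c m x i"
        using NE i t unfolding bw_nash_eq_def z_def by blast
      hence L1: "(t + lo)/2 - c * (1 - (t + hi)/2) \<le> S0 / N" using dev orig' by simp
      have alg: "(t + lo)/2 - c * (1 - (t + hi)/2) = lo - c * (1 - (lo + hi)/2) - e * (1 + c) / 2"
        by (simp add: t_def field_simps)
      have S0e: "S0 = (lo + b)/2 - c * (1 - (lo + hi)/2)" by (rule S0_def)
      obtain A B Q where AB: "A = c * (1 - (lo + hi)/2)" "B = e * (1 + c)" "Q = S0 / N" by blast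
      have f1: "lo - A - B / 2 \<le> Q" using L1 alg AB by simp
      have f2: "(b - lo) / 2 \<le> Q" using R1 AB by simp
      have f3: "Q \<le> S0 / 3" using q3 AB by simp
      have f4: "B \<le> S0 / 3" using eS AB by simp
      have f5: "S0 = (lo + b)/2 - A" using S0e AB by simp
      from f1 f2 f3 f4 f5 S0p show False by argo
    qed
  qed
qed



theorem lemma4:
  fixes c :: real and m :: nat and x :: "nat \<Rightarrow> real"
  assumes "c \<ge> 0" and "m \<ge> 2"
    and "bw_nash_eq c m x" and "non_convergent m x"
  shows "(\<forall>p \<in> x ` {..<m}. mult_at m x p \<le> 2)
       \<and> mult_at m x (Min (x ` {..<m})) = 2
       \<and> mult_at m x (Max (x ` {..<m})) = 2
       \<and> m \<noteq> 3"
proof -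
  note c = assms(1) and NE = assms(3)
  let ?S = "x ` {..<m}"
  define lo where "lo = Min ?S"
  define hi where "hi = Max ?S"
  have fin: "finite ?S" by simp
  have ne: "?S \<noteq> {}" using assms(2) by (auto simp: lessThan_empty_iff)
  obtain il where il: "il < m" "x il = lo" using Min_in[OF fin ne] unfolding lo_def by auto
  obtain ih where ih: "ih < m" "x ih = hi" using Max_in[OF fin ne] unfolding hi_def by auto
  have lo: "\<forall>k<m. lo \<le> x k" unfolding lo_def using fin by auto
  have hi: "\<forall>k<m. x k \<le> hi" unfolding hi_def using fin by auto
  have lh: "lo < hi"
  proof -
    obtain i j where "i < m" "j < m" "x i \<noteq> x j" using assms(4) by (auto simp: non_convergent_def)
    moreover have "lo \<le> x i" "x i \<le> hi" "lo \<le> x j" "x j \<le> hi" using lo hi calculation by auto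
    ultimately show ?thesis by linarith
  qed
  have L: "mult_at m x lo = 2"
    using left_ge2[OF c NE il lo ih lh hi] left_le2[OF c NE il lo ih lh hi] by simp
  have H: "mult_at m x hi = 2"
  proof -
    let ?y = "\<lambda>k. 1 - x k"
    have NE': "bw_nash_eq c m ?y" by (rule refl_NE[OF NE])
    have i': "?y ih = 1 - hi" using ih by simp
    have k': "?y il = 1 - lo" using il by simp
    have lo': "\<forall>k<m. 1 - hi \<le> ?y k" using hi by auto
    have hi': "\<forall>k<m. ?y k \<le> 1 - lo" using lo by auto
    have lh': "1 - hi < 1 - lo" using lh by simp
    have "mult_at m ?y (1 - hi) = 2"
      using left_ge2[OF c NE' ih(1) i' lo' il(1) k' lh' hi'] left_le2[OF c NE' ih(1) i' lo' il(1) k' lh' hi']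
      by simp
    thus ?thesis by (simp add: mult_refl)
  qed
  have I: "\<forall>p\<in>?S. mult_at m x p \<le> 2"
  proof
    fix p assume "p \<in> ?S"
    then obtain i where i: "i < m" "x i = p" by auto
    show "mult_at m x p \<le> 2"
    proof (cases "p = lo \<or> p = hi")
      case True thus ?thesis using L H by auto
    next
      case False
      hence lp: "lo < p" "p < hi" using lo hi i by force+
      obtain ka where ka: "ka < m" "x ka < p" "\<forall>k<m. x k < p \<longrightarrow> x k \<le> x ka"
        using prev_pos[of il m x p] il lp by auto
      obtain kb where kb: "kb < m" "p < x kb" "\<forall>k<m. p < x k \<longrightarrow> x kb \<le> x k"
        using next_pos[of ih m p x] ih lp by auto
      have sep: "\<forall>k<m. x k = p \<or> x k \<le> x ka \<or> x kb \<le> x k"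
      proof (intro allI impI)
        fix k assume k: "k < m"
        show "x k = p \<or> x k \<le> x ka \<or> x kb \<le> x k"
        proof (cases "x k < p")
          case True thus ?thesis using ka k by blast
        next
          case False thus ?thesis using kb k by force
        qed
      qed
      show ?thesis by (rule interior_le2[OF NE i ka(1) refl kb(1) refl ka(2) kb(2) sep])
    qed
  qed
  have M: "m \<noteq> 3"
  proof -
    let ?A = "{k. k < m \<and> x k = lo}" and ?B = "{k. k < m \<and> x k = hi}"
    have "?A \<inter> ?B = {}" using lh by auto
    moreover have "?A \<union> ?B \<subseteq> {..<m}" by auto
    moreover have "finite ?A" "finite ?B" by auto
    ultimately have "card ?A + card ?B \<le> m"
      by (metis card_Un_disjoint card_lessThan card_mono finite_lessThan)
    moreover have "card ?A = 2" "card ?B = 2" using L H by (simp_all add: mult_at_def)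
    ultimately show ?thesis by simp
  qed
  show ?thesis using I L H M unfolding lo_def hi_def by blast
qed

end
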